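(* Let $R$ be a Noetherian ring and $I\subset R$ an ideal. If $I^n\cap(0:I)=0$ for some $n\in\mathbb N$, then $I^n(0:I^\infty)=0$.
   Context: $0:I^\infty=\bigcup_{t\ge1}(0:I^t)$. *)

theory Defs
  imports "HOL-Algebra.Ideal_Product" "HOL-Algebra.Ring_Divisibility"
begin

primrec ideal_pow :: "('a, 'b) ring_scheme \<Rightarrow> 'a set \<Rightarrow> nat \<Rightarrow> 'a set" where
  "ideal_pow R I 0 = carrier R"
| "ideal_pow R I (Suc n) = ideal_prod R I (ideal_pow R I n)"

definition ann :: "('a, 'b) ring_scheme \<Rightarrow> 'a set \<Rightarrow> 'a set" where
  "ann R J = {x \<in> carrier R. \<forall>j \<in> J. x \<otimes>\<^bsub>R\<^esub> j = \<zero>\<^bsub>R\<^esub>}"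

definition ann_inf :: "('a, 'b) ring_scheme \<Rightarrow> 'a set \<Rightarrow> 'a set" where
  "ann_inf R I = (\<Union>t\<in>{1..}. ann R (ideal_pow R I t))"

end

theory Submission
  imports Defs
begin

lemma ideal_pow_ideal:
  assumes "cring R" "ideal I R"
  shows "ideal (ideal_pow R I t) R"
proof (induction t)
  case 0
  then show ?case using assms by (simp add: ring.oneideal cring.axioms(1))
next
  case (Suc t)
  then show ?case using assms by (simp add: ring.ideal_prod_is_ideal cring.axioms(1))
qed

lemma key:
  fixes R (structure)
  assumes "cring R" and "ideal I R"
    and h: "ideal_pow R I n \<inter> ann R I = {\<zero>}"
  shows "x \<in> carrier R \<Longrightarrow> (\<forall>c \<in> ideal_pow R I t. x \<otimes> c = \<zero>)
     \<Longrightarrow> \<forall>a \<in> ideal_pow R I n. a \<otimes> x = \<zero>"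
proof (induction t arbitrary: x)
  interpret cring R by fact
  case 0
  then have "x \<otimes> \<one> = \<zero>" using one_closed by (metis ideal_pow.simps(1))
  then have "x = \<zero>" using 0 by simp
  moreover have "ideal_pow R I n \<subseteq> carrier R"
    using ideal_pow_ideal[OF assms(1,2)] ideal.axioms(1) additive_subgroup.a_subset by blast
  ultimately show ?case by auto
next
  interpret cring R by fact
  case (Suc t)
  have In: "ideal (ideal_pow R I n) R" using ideal_pow_ideal[OF assms(1,2)] .
  have It: "ideal (ideal_pow R I t) R" using ideal_pow_ideal[OF assms(1,2)] .
  have Icar: "I \<subseteq> carrier R" using assms(2) ideal.axioms(1) additive_subgroup.a_subset by blast
  have Itcar: "ideal_pow R I t \<subseteq> carrier R" using It ideal.axioms(1) additive_subgroup.a_subset by blast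
  have Incar: "ideal_pow R I n \<subseteq> carrier R" using In ideal.axioms(1) additive_subgroup.a_subset by blast
  have xb: "\<forall>a \<in> ideal_pow R I n. a \<otimes> (x \<otimes> b) = \<zero>" if b: "b \<in> I" for b
  proof -
    have "\<forall>c \<in> ideal_pow R I t. (x \<otimes> b) \<otimes> c = \<zero>"
    proof
      fix c assume c: "c \<in> ideal_pow R I t"
      have "b \<otimes> c \<in> ideal_pow R I (Suc t)" using b c by (simp add: ideal_prod.prod)
      then have "x \<otimes> (b \<otimes> c) = \<zero>" using Suc.prems by blast
      moreover have "(x \<otimes> b) \<otimes> c = x \<otimes> (b \<otimes> c)"
        using b c Icar Itcar by (intro m_assoc[OF Suc.prems(1)]) auto
      ultimately show "(x \<otimes> b) \<otimes> c = \<zero>" by simp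
    qed
    moreover have "x \<otimes> b \<in> carrier R" using b Icar Suc.prems(1) by auto
    ultimately show ?thesis using Suc.IH[of "x \<otimes> b"] by simp
  qed
  show ?case
  proof
    fix a assume a: "a \<in> ideal_pow R I n"
    have "a \<otimes> x \<in> ideal_pow R I n" by (rule ideal.I_r_closed[OF In a Suc.prems(1)])
    moreover have "a \<otimes> x \<in> ann R I"
      unfolding ann_def
    proof (intro CollectI conjI ballI)
      show "a \<otimes> x \<in> carrier R" using a Incar Suc.prems(1) by auto
      fix j assume j: "j \<in> I"
      have "(a \<otimes> x) \<otimes> j = a \<otimes> (x \<otimes> j)" using a j Incar Icar Suc.prems(1) by (intro m_assoc) auto
      then show "(a \<otimes> x) \<otimes> j = \<zero>" using xb[OF j] a by simp
    qed
    ultimately have "a \<otimes> x \<in> ideal_pow R I n \<inter> ann R I" by (rule IntI)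
    then show "a \<otimes> x = \<zero>" unfolding h by simp
  qed
qed

theorem lemma3p6:
  fixes R (structure) and I :: "'a set" and n :: nat
  assumes "cring R" and "noetherian_ring R" and "ideal I R"
    and "ideal_pow R I n \<inter> ann R I = {\<zero>}"
  shows "ideal_prod R (ideal_pow R I n) (ann_inf R I) = {\<zero>}"
proof
  interpret cring R by fact
  show "ideal_prod R (ideal_pow R I n) (ann_inf R I) \<subseteq> {\<zero>}"
  proof
    fix s assume "s \<in> ideal_prod R (ideal_pow R I n) (ann_inf R I)"
    then show "s \<in> {\<zero>}"
    proof (induct s rule: ideal_prod.induct)
      case (prod i j)
      then obtain t where "j \<in> ann R (ideal_pow R I t)" unfolding ann_inf_def by blast
      then have "j \<in> carrier R" "\<forall>c \<in> ideal_pow R I t. j \<otimes> c = \<zero>" unfolding ann_def by auto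
      then show ?case using key[OF assms(1,3,4)] prod(1) by blast
    next
      case (sum s1 s2)
      then show ?case by simp
    qed
  qed
next
  interpret cring R by fact
  have In: "ideal (ideal_pow R I n) R" using ideal_pow_ideal[OF assms(1,3)] .
  have I1: "ideal (ideal_pow R I 1) R" using ideal_pow_ideal[OF assms(1,3)] .
  have "\<zero> \<in> ideal_pow R I n" using In additive_subgroup.zero_closed ideal.axioms(1) by blast
  moreover have "\<zero> \<in> ann R (ideal_pow R I 1)"
    unfolding ann_def using I1 ideal.axioms(1) additive_subgroup.a_subset by fastforce
  then have "\<zero> \<in> ann_inf R I" unfolding ann_inf_def
    by (intro UN_I[of 1]) auto
  ultimately have "\<zero> \<otimes> \<zero> \<in> ideal_prod R (ideal_pow R I n) (ann_inf R I)"
    by (rule ideal_prod.prod)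
  then show "{\<zero>} \<subseteq> ideal_prod R (ideal_pow R I n) (ann_inf R I)" by simp
qed

end
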